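(* Let $R$ be a commutative ring and let $\mathcal X'(R):=\mathcal X'(\mathrm{Spec}(R))$. Then the map $$\mathscr J:\mathcal X'(R)^{\mathrm{zar}}\to\mathrm{Rd}(R)^{\mathrm{inv}},\qquad C\mapsto\bigcap\{P\in\mathrm{Spec}(R)\mid P\in C\}$$ is a homeomorphism. In particular, $\mathcal X'(R)$ with the Zariski topology is a spectral space. Moreover, the same map $\mathscr J$ is a homeomorphism between $\mathcal X'(R)^{\mathrm{inv}}$ and $\mathrm{Rd}(R)^{\mathrm{hk}}$.
   Context: For a spectral space $X$, $\mathcal X'(X)$ is the set of nonempty closed subsets of $X$, with the Zariski topology having as basis of open sets $\mathcal U'(\Omega):=\{Y\in\mathcal X'(X)\mid Y\cap\Omega=\emptyset\}$, $\Omega$ ranging over quasi-compact open subsets of $X$; $\mathrm{Spec}(R)$ carries the Zariski topology. $\mathrm{Rd}(R)$ is the set of proper radical ideals of $R$; $\mathrm{Rd}(R)^{\mathrm{hk}}$ denotes it with the hull-kernel topology, whose subbasis of closed sets consists of the sets $\{H\in\mathrm{Rd}(R)\mid x_1,\dots,x_n\in H\}$ for $x_1,\dots,x_n\in R$ (with this topology it is spectral). For a spectral space $Y$, $Y^{\mathrm{inv}}$ denotes $Y$ with the inverse topology, having the quasi-compact open subsets of $Y$ as a basis of closed sets. *)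

theory Defs
  imports "HOL-Analysis.Analysis"
begin

definition ring_ideal :: "'a::comm_ring_1 set \<Rightarrow> bool" where
  "ring_ideal I \<longleftrightarrow> 0 \<in> I \<and> (\<forall>x\<in>I. \<forall>y\<in>I. x + y \<in> I) \<and> (\<forall>r. \<forall>x\<in>I. r * x \<in> I)"

definition prime_ideal :: "'a::comm_ring_1 set \<Rightarrow> bool" where
  "prime_ideal P \<longleftrightarrow> ring_ideal P \<and> P \<noteq> UNIV \<and> (\<forall>a b. a * b \<in> P \<longrightarrow> a \<in> P \<or> b \<in> P)"

definition radical_ideal :: "'a::comm_ring_1 set \<Rightarrow> bool" where
  "radical_ideal I \<longleftrightarrow> ring_ideal I \<and> (\<forall>x (n::nat). x ^ n \<in> I \<longrightarrow> x \<in> I)"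

definition Spec :: "'a::comm_ring_1 set set" where
  "Spec = {P. prime_ideal P}"

definition zariski_Spec :: "'a::comm_ring_1 set topology" where
  "zariski_Spec = topology_generated_by {Spec - {P \<in> Spec. S \<subseteq> P} | S. True}"

definition Rd :: "'a::comm_ring_1 set set" where
  "Rd = {H. radical_ideal H \<and> H \<noteq> UNIV}"

definition hk_Rd :: "'a::comm_ring_1 set topology" where
  "hk_Rd = topology_generated_by {Rd - {H \<in> Rd. F \<subseteq> H} | F. finite F}"

definition qc_open :: "'b topology \<Rightarrow> 'b set \<Rightarrow> bool" where
  "qc_open X U \<longleftrightarrow> openin X U \<and> compactin X U"

definition inverse_topology :: "'b topology \<Rightarrow> 'b topology" where
  "inverse_topology X = topology_generated_by {topspace X - U | U. qc_open X U}"

definition Xprime :: "'b topology \<Rightarrow> 'b set set" where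
  "Xprime X = {C. closedin X C \<and> C \<noteq> {}}"

definition Xprime_zar :: "'b topology \<Rightarrow> 'b set topology" where
  "Xprime_zar X = topology_generated_by ((\<lambda>W. {Y \<in> Xprime X. Y \<inter> W = {}}) ` {W. qc_open X W})"

definition irreducible_in :: "'b topology \<Rightarrow> 'b set \<Rightarrow> bool" where
  "irreducible_in X C \<longleftrightarrow> C \<subseteq> topspace X \<and> C \<noteq> {} \<and>
     (\<forall>A B. closedin X A \<and> closedin X B \<and> C \<subseteq> A \<union> B \<longrightarrow> C \<subseteq> A \<or> C \<subseteq> B)"

definition spectral_space :: "'b topology \<Rightarrow> bool" where
  "spectral_space X \<longleftrightarrow>
     compact_space X \<and> t0_space X \<and>
     (\<forall>U V. qc_open X U \<and> qc_open X V \<longrightarrow> qc_open X (U \<inter> V)) \<and>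
     (\<forall>U x. openin X U \<and> x \<in> U \<longrightarrow> (\<exists>V. qc_open X V \<and> x \<in> V \<and> V \<subseteq> U)) \<and>
     (\<forall>C. closedin X C \<and> irreducible_in X C \<longrightarrow> (\<exists>!x. x \<in> C \<and> X closure_of {x} = C))"

end

theory Submission
  imports Defs
begin

lemma ideal_0: "ring_ideal I \<Longrightarrow> 0 \<in> I" by (simp add: ring_ideal_def)
lemma ideal_add: "ring_ideal I \<Longrightarrow> x \<in> I \<Longrightarrow> y \<in> I \<Longrightarrow> x + y \<in> I" by (simp add: ring_ideal_def)
lemma ideal_mult: "ring_ideal I \<Longrightarrow> x \<in> I \<Longrightarrow> r * x \<in> I" by (simp add: ring_ideal_def)
lemma ideal_mult2: "ring_ideal I \<Longrightarrow> x \<in> I \<Longrightarrow> x * r \<in> I" by (metis ideal_mult mult.commute)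
lemma ideal_one: "ring_ideal I \<Longrightarrow> 1 \<in> I \<Longrightarrow> I = UNIV"
  by (metis UNIV_eq_I ideal_mult mult.right_neutral)

lemma prime_radical: "prime_ideal P \<Longrightarrow> radical_ideal P"
proof -
  assume P: "prime_ideal P"
  have "x ^ n \<in> P \<Longrightarrow> x \<in> P" for x n
  proof (induction n)
    case 0 then show ?case using P ideal_one by (auto simp: prime_ideal_def)
  next
    case (Suc n) then show ?case using P by (auto simp: prime_ideal_def)
  qed
  then show ?thesis using P by (auto simp: radical_ideal_def prime_ideal_def)
qed

lemma prime_exists:
  fixes I :: "'a::comm_ring_1 set"
  assumes I: "ring_ideal I" and f: "\<forall>n. f ^ n \<notin> I"
  shows "\<exists>P. prime_ideal P \<and> I \<subseteq> P \<and> f \<notin> P"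
proof -
  define Z where "Z = {J. ring_ideal J \<and> I \<subseteq> J \<and> (\<forall>n. f ^ n \<notin> J)}"
  have "Z \<noteq> {}" using I f by (auto simp: Z_def)
  moreover have "\<Union>C \<in> Z" if "C \<noteq> {}" "subset.chain Z C" for C
  proof -
    have CZ: "C \<subseteq> Z" and ch: "\<forall>A\<in>C. \<forall>B\<in>C. A \<subseteq> B \<or> B \<subseteq> A"
      using that by (auto simp: subset.chain_def)
    have "ring_ideal (\<Union>C)"
      unfolding ring_ideal_def
    proof (intro conjI ballI allI)
      show "0 \<in> \<Union>C" using that CZ by (auto simp: Z_def ring_ideal_def)
    next
      fix x y assume "x \<in> \<Union>C" "y \<in> \<Union>C"
      then obtain A B where AB: "A \<in> C" "B \<in> C" "x \<in> A" "y \<in> B" by auto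
      have "ring_ideal A" "ring_ideal B" using AB CZ by (auto simp: Z_def)
      moreover have "A \<subseteq> B \<or> B \<subseteq> A" using ch AB by blast
      ultimately show "x + y \<in> \<Union>C" using AB
        by (metis UnionI ideal_add subsetD)
    next
      fix r x assume "x \<in> \<Union>C"
      then obtain A where "A \<in> C" "x \<in> A" by auto
      moreover have "ring_ideal A" using \<open>A \<in> C\<close> CZ by (auto simp: Z_def)
      ultimately show "r * x \<in> \<Union>C" by (meson UnionI ideal_mult)
    qed
    then show ?thesis using that CZ by (auto simp: Z_def)
  qed
  ultimately obtain M where MZ: "M \<in> Z" and max: "\<forall>X\<in>Z. M \<subseteq> X \<longrightarrow> X = M"
    using subset_Zorn_nonempty[of Z] by blast
  have M: "ring_ideal M" "I \<subseteq> M" "\<forall>n. f ^ n \<notin> M" using MZ by (auto simp: Z_def)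
  have fM: "f \<notin> M" using M(3)[rule_format, of 1] by simp
  have notU: "M \<noteq> UNIV" using fM by auto
  have ext: "\<exists>n m r. f ^ n = m + r * a \<and> m \<in> M" if "a \<notin> M" for a
  proof -
    define J where "J = {m + r * a | m r. m \<in> M}"
    have J: "ring_ideal J"
      unfolding ring_ideal_def J_def
    proof (intro conjI ballI allI)
      have "0 = 0 + 0*a \<and> 0 \<in> M" by (simp add: ideal_0 M(1))
      then show "0 \<in> {m + r * a |m r. m \<in> M}" by blast
    next
      fix x y assume "x \<in> {m + r * a |m r. m \<in> M}" "y \<in> {m + r * a |m r. m \<in> M}"
      then obtain m1 r1 m2 r2 where "x = m1 + r1 * a" "y = m2 + r2 * a" "m1 \<in> M" "m2 \<in> M" by auto
      then have "x + y = (m1+m2) + (r1+r2)*a \<and> m1+m2 \<in> M" using M(1) by (simp add: ideal_add algebra_simps)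
      then show "x + y \<in> {m + r * a |m r. m \<in> M}" by blast
    next
      fix s x assume "x \<in> {m + r * a |m r. m \<in> M}"
      then obtain m1 r1 where "x = m1 + r1 * a" "m1 \<in> M" by auto
      then have "s * x = (s*m1) + (s*r1)*a \<and> s*m1 \<in> M" using M(1) by (simp add: ideal_mult ideal_mult2 algebra_simps)
      then show "s * x \<in> {m + r * a |m r. m \<in> M}" by blast
    qed
    have "M \<subseteq> J" unfolding J_def
    proof
      fix x assume "x \<in> M" then have "x = x + 0*a \<and> x \<in> M" by simp
      then show "x \<in> {m + r * a |m r. m \<in> M}" by blast
    qed
    moreover have "a \<in> J" unfolding J_def
    proof -
      have "a = 0 + 1*a \<and> 0 \<in> M" by (simp add: ideal_0 M(1))
      then show "a \<in> {m + r * a |m r. m \<in> M}" by blast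
    qed
    ultimately have "J \<notin> Z" using max that by blast
    then obtain n where "f ^ n \<in> J" using J \<open>M \<subseteq> J\<close> M(2) by (auto simp: Z_def)
    then show ?thesis unfolding J_def by auto
  qed
  have "a \<in> M \<or> b \<in> M" if "a * b \<in> M" for a b
  proof (rule ccontr)
    assume "\<not> (a \<in> M \<or> b \<in> M)"
    then obtain n1 m1 r1 n2 m2 r2 where e1: "f ^ n1 = m1 + r1 * a" "m1 \<in> M"
      and e2: "f ^ n2 = m2 + r2 * b" "m2 \<in> M"
      using ext by meson
    have "f ^ (n1 + n2) = m1 * m2 + m1 * (r2 * b) + (r1 * a) * m2 + (r1 * r2) * (a * b)"
      by (simp add: power_add e1 e2 algebra_simps)
    also have "\<dots> \<in> M"
    proof -
      have "m1 * m2 \<in> M" "m1 * (r2 * b) \<in> M" "(r1 * a) * m2 \<in> M" "(r1 * r2) * (a * b) \<in> M"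
        using M(1) e1 e2 that by (auto simp: ideal_mult ideal_mult2)
      then show ?thesis using M(1) by (simp add: ideal_add)
    qed
    finally show False using M(3) by blast
  qed
  then have "prime_ideal M" using M(1) notU by (auto simp: prime_ideal_def)
  then show ?thesis using M fM by blast
qed

definition gen :: "'a::comm_ring_1 set \<Rightarrow> 'a set" where
  "gen S = \<Inter>{I. ring_ideal I \<and> S \<subseteq> I}"

lemma ideal_Inter: "\<forall>I\<in>A. ring_ideal I \<Longrightarrow> ring_ideal (\<Inter>A)"
  by (auto simp: ring_ideal_def)

lemma gen_ideal: "ring_ideal (gen S)"
  unfolding gen_def by (rule ideal_Inter) auto

lemma gen_sub: "S \<subseteq> gen S" by (auto simp: gen_def)
lemma gen_least: "ring_ideal I \<Longrightarrow> S \<subseteq> I \<Longrightarrow> gen S \<subseteq> I" by (auto simp: gen_def)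
lemma gen_mono: "S \<subseteq> T \<Longrightarrow> gen S \<subseteq> gen T"
  by (meson gen_ideal gen_least gen_sub order_trans)

lemma gen_finite:
  assumes "x \<in> gen S" shows "\<exists>F. finite F \<and> F \<subseteq> S \<and> x \<in> gen F"
proof -
  define J where "J = {x. \<exists>F. finite F \<and> F \<subseteq> S \<and> x \<in> gen F}"
  have "ring_ideal J"
    unfolding ring_ideal_def
  proof (intro conjI ballI allI)
    show "0 \<in> J" unfolding J_def using gen_ideal[of "{}"] ideal_0 by blast
  next
    fix x y assume "x \<in> J" "y \<in> J"
    then obtain F G where FG: "finite F" "F \<subseteq> S" "x \<in> gen F" "finite G" "G \<subseteq> S" "y \<in> gen G"
      unfolding J_def by blast
    then have "x \<in> gen (F \<union> G)" "y \<in> gen (F \<union> G)" using gen_mono[of F "F\<union>G"] gen_mono[of G "F\<union>G"] by auto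
    then have "x + y \<in> gen (F \<union> G)" using gen_ideal ideal_add by blast
    then show "x + y \<in> J" unfolding J_def using FG by blast
  next
    fix r x assume "x \<in> J"
    then show "r * x \<in> J" unfolding J_def using gen_ideal ideal_mult by blast
  qed
  moreover have "S \<subseteq> J" unfolding J_def using gen_sub by blast
  ultimately have "gen S \<subseteq> J" by (rule gen_least)
  then show ?thesis using assms unfolding J_def by blast
qed

lemma radical_pow: "radical_ideal H \<Longrightarrow> x ^ n \<in> H \<Longrightarrow> x \<in> H"
  by (auto simp: radical_ideal_def)

lemma K_one:
  assumes "\<forall>P\<in>Spec. S \<subseteq> P \<longrightarrow> f \<in> P"
  shows "\<exists>G. finite G \<and> G \<subseteq> S \<and> (\<forall>H. radical_ideal H \<and> G \<subseteq> H \<longrightarrow> f \<in> H)"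
proof -
  have "\<exists>n. f ^ n \<in> gen S"
  proof (rule ccontr)
    assume "\<nexists>n. f ^ n \<in> gen S"
    then obtain P where "prime_ideal P" "gen S \<subseteq> P" "f \<notin> P"
      using prime_exists[OF gen_ideal] by blast
    then show False using assms gen_sub[of S] by (auto simp: Spec_def)
  qed
  then obtain n where "f ^ n \<in> gen S" by blast
  then obtain G where G: "finite G" "G \<subseteq> S" "f ^ n \<in> gen G" using gen_finite by blast
  have "f \<in> H" if "radical_ideal H" "G \<subseteq> H" for H
  proof -
    have "gen G \<subseteq> H" using that gen_least[of H G] by (simp add: radical_ideal_def)
    then show ?thesis using G(3) that radical_pow by blast
  qed
  then show ?thesis using G by blast
qed

lemma K:
  assumes "finite F" "\<forall>P\<in>Spec. S \<subseteq> P \<longrightarrow> F \<subseteq> P"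
  shows "\<exists>G. finite G \<and> G \<subseteq> S \<and> (\<forall>H. radical_ideal H \<and> G \<subseteq> H \<longrightarrow> F \<subseteq> H)"
proof -
  have "\<forall>f\<in>F. \<exists>G. finite G \<and> G \<subseteq> S \<and> (\<forall>H. radical_ideal H \<and> G \<subseteq> H \<longrightarrow> f \<in> H)"
  proof
    fix f assume "f \<in> F"
    then have "\<forall>P\<in>Spec. S \<subseteq> P \<longrightarrow> f \<in> P" using assms(2) by blast
    then show "\<exists>G. finite G \<and> G \<subseteq> S \<and> (\<forall>H. radical_ideal H \<and> G \<subseteq> H \<longrightarrow> f \<in> H)"
      by (rule K_one)
  qed
  then obtain Gf where Gf: "\<forall>f\<in>F. finite (Gf f) \<and> Gf f \<subseteq> S \<and> (\<forall>H. radical_ideal H \<and> Gf f \<subseteq> H \<longrightarrow> f \<in> H)"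
    by metis
  show ?thesis
    by (rule exI[of _ "\<Union>(Gf ` F)"]) (use Gf assms(1) in blast)
qed

lemma Rd_one: "H \<in> Rd \<Longrightarrow> 1 \<notin> H"
  using ideal_one by (auto simp: Rd_def radical_ideal_def)

lemma Rd_Inter: "A \<noteq> {} \<Longrightarrow> A \<subseteq> Rd \<Longrightarrow> \<Inter>A \<in> Rd"
proof -
  assume A: "A \<noteq> {}" "A \<subseteq> Rd"
  have "ring_ideal (\<Inter>A)" using A by (intro ideal_Inter) (auto simp: Rd_def radical_ideal_def)
  moreover have "x \<in> \<Inter>A" if "x ^ n \<in> \<Inter>A" for x and n :: nat
    using that A by (auto simp: Rd_def radical_ideal_def)
  moreover have "1 \<notin> \<Inter>A" using A Rd_one by blast
  ultimately show ?thesis by (auto simp: Rd_def radical_ideal_def)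
qed

lemma Spec_Rd: "Spec \<subseteq> Rd"
  using prime_radical by (auto simp: Spec_def Rd_def prime_ideal_def)

lemma Rd_V:
  assumes H: "H \<in> Rd"
  shows "{P\<in>Spec. H \<subseteq> P} \<noteq> {}" "\<Inter>{P\<in>Spec. H \<subseteq> P} = H"
proof -
  have rad: "radical_ideal H" and id: "ring_ideal H" using H by (auto simp: Rd_def radical_ideal_def)
  have *: "\<exists>P\<in>Spec. H \<subseteq> P \<and> f \<notin> P" if "f \<notin> H" for f
  proof -
    have "\<forall>n. f ^ n \<notin> H" using that rad radical_pow by blast
    then show ?thesis using prime_exists[OF id] by (auto simp: Spec_def)
  qed
  show "{P\<in>Spec. H \<subseteq> P} \<noteq> {}" using *[OF Rd_one[OF H]] by blast
  show "\<Inter>{P\<in>Spec. H \<subseteq> P} = H" using * by blast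
qed

lemma Spec_ne: "Spec \<noteq> {}"
proof -
  have "ring_ideal {0::'a}" by (simp add: ring_ideal_def)
  moreover have "\<forall>n. (1::'a) ^ n \<notin> {0}" by simp
  ultimately show ?thesis using prime_exists[of "{0::'a}" 1] by (auto simp: Spec_def)
qed

definition VV :: "'a::comm_ring_1 set \<Rightarrow> 'a set set" where
  "VV S = {P\<in>Spec. S \<subseteq> P}"

lemma zar_eq: "zariski_Spec = topology_generated_by {Spec - VV S | S. True}"
  by (simp add: zariski_Spec_def VV_def)

lemma VV_empty: "VV {} = Spec" by (auto simp: VV_def)
lemma VV_one: "VV {1} = {}"
  using Spec_Rd Rd_one by (auto simp: VV_def)

lemma Z_open: "openin zariski_Spec W \<longleftrightarrow> (\<exists>S. W = Spec - VV S)"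
proof
  assume "openin zariski_Spec W"
  then have "generate_topology_on {Spec - VV S | S. True} W"
    by (simp add: zar_eq openin_topology_generated_by_iff)
  then show "\<exists>S. W = Spec - VV S"
  proof induction
    case Empty then show ?case using VV_empty by blast
  next
    case (Int a b)
    then obtain S T where ST: "a = Spec - VV S" "b = Spec - VV T" by blast
    have "a \<inter> b = Spec - VV {s * t | s t. s \<in> S \<and> t \<in> T}"
    proof -
      have "{s * t | s t. s \<in> S \<and> t \<in> T} \<subseteq> P \<longleftrightarrow> S \<subseteq> P \<or> T \<subseteq> P" if "P \<in> Spec" for P
      proof -
        have pr: "prime_ideal P" using that by (simp add: Spec_def)
        then have id: "ring_ideal P" by (simp add: prime_ideal_def)
        show ?thesis
        proof
          assume A: "{s * t | s t. s \<in> S \<and> t \<in> T} \<subseteq> P"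
          show "S \<subseteq> P \<or> T \<subseteq> P"
          proof (rule ccontr)
            assume "\<not> (S \<subseteq> P \<or> T \<subseteq> P)"
            then obtain s t where "s \<in> S" "s \<notin> P" "t \<in> T" "t \<notin> P" by blast
            moreover have "s * t \<in> P" using A \<open>s \<in> S\<close> \<open>t \<in> T\<close> by blast
            ultimately show False using pr by (auto simp: prime_ideal_def)
          qed
        next
          assume "S \<subseteq> P \<or> T \<subseteq> P"
          then show "{s * t | s t. s \<in> S \<and> t \<in> T} \<subseteq> P"
            using id ideal_mult ideal_mult2 by blast
        qed
      qed
      then show ?thesis using ST unfolding VV_def by blast
    qed
    then show ?case by blast
  next
    case (UN K)
    then have "\<forall>k\<in>K. \<exists>S. k = Spec - VV S" by blast
    then obtain Sf where Sf: "\<forall>k\<in>K. k = Spec - VV (Sf k)" by metis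
    have "\<Union>K = Spec - VV (\<Union>(Sf ` K))"
      using Sf by (auto simp: VV_def)
    then show ?case by blast
  next
    case (Basis s) then show ?case by blast
  qed
next
  assume "\<exists>S. W = Spec - VV S"
  then show "openin zariski_Spec W"
    by (auto simp: zar_eq intro: topology_generated_by_Basis)
qed

lemma Z_top: "topspace zariski_Spec = Spec"
proof -
  have "\<Union>{Spec - VV S | S. True} = (Spec :: 'a set set)"
    using VV_one[where 'a='a] by auto
  then show ?thesis by (simp add: zar_eq)
qed

lemma VV_sub: "VV S \<subseteq> Spec" by (auto simp: VV_def)

lemma Z_closed: "closedin zariski_Spec C \<longleftrightarrow> (\<exists>S. C = VV S)"
proof
  assume "closedin zariski_Spec C"
  then obtain S where "Spec - C = Spec - VV S" "C \<subseteq> Spec"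
    by (auto simp: closedin_def Z_top Z_open)
  then have "C = VV S" using VV_sub by blast
  then show "\<exists>S. C = VV S" by blast
next
  assume "\<exists>S. C = VV S"
  then obtain S where S: "C = VV S" by blast
  have "Spec - C = Spec - VV S" using S by simp
  then show "closedin zariski_Spec C"
    unfolding closedin_def Z_top Z_open using S VV_sub by blast
qed

lemma Z_qc: "qc_open zariski_Spec W \<longleftrightarrow> (\<exists>F. finite F \<and> W = Spec - VV F)"
proof
  assume "qc_open zariski_Spec W"
  then have op: "openin zariski_Spec W" and cp: "compactin zariski_Spec W" by (auto simp: qc_open_def)
  then obtain S where S: "W = Spec - VV S" using Z_open by blast
  have "W \<subseteq> \<Union>((\<lambda>s. Spec - VV {s}) ` S)" using S by (auto simp: VV_def)
  moreover have "\<forall>U\<in>(\<lambda>s. Spec - VV {s}) ` S. openin zariski_Spec U" using Z_open by blast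
  ultimately obtain C where C: "finite C" "C \<subseteq> (\<lambda>s. Spec - VV {s}) ` S" "W \<subseteq> \<Union>C"
    using cp unfolding compactin_def by meson
  then obtain F where F: "F \<subseteq> S" "finite F" "C = (\<lambda>s. Spec - VV {s}) ` F"
    by (meson finite_subset_image)
  have "W = Spec - VV F"
  proof
    show "W \<subseteq> Spec - VV F" using C(3) F(3) by (auto simp: VV_def)
    show "Spec - VV F \<subseteq> W" using S F(1) by (auto simp: VV_def)
  qed
  then show "\<exists>F. finite F \<and> W = Spec - VV F" using F by blast
next
  assume "\<exists>F. finite F \<and> W = Spec - VV F"
  then obtain F where F: "finite F" "W = Spec - VV F" by blast
  have "openin zariski_Spec W" using F Z_open by blast
  moreover have "compactin zariski_Spec W"
    unfolding compactin_def
  proof (intro conjI allI impI)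
    show "W \<subseteq> topspace zariski_Spec" using F Z_top by auto
  next
    fix \<U> assume U: "(\<forall>U\<in>\<U>. openin zariski_Spec U) \<and> W \<subseteq> \<Union>\<U>"
    then have "\<forall>U\<in>\<U>. \<exists>S. U = Spec - VV S" using Z_open by blast
    then obtain Sf where Sf: "\<forall>U\<in>\<U>. U = Spec - VV (Sf U)" by metis
    define T where "T = \<Union>(Sf ` \<U>)"
    have "\<forall>P\<in>Spec. T \<subseteq> P \<longrightarrow> F \<subseteq> P"
    proof (intro ballI impI)
      fix P assume P: "P \<in> Spec" "T \<subseteq> P"
      have "P \<notin> U" if "U \<in> \<U>" for U
      proof -
        have "Sf U \<subseteq> P" using P(2) that unfolding T_def by blast
        then show ?thesis using Sf that unfolding VV_def by blast
      qed
      then have "P \<notin> \<Union>\<U>" by blast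
      then show "F \<subseteq> P" using U F P by (auto simp: VV_def)
    qed
    from K[OF F(1) this] obtain G where G: "finite G" "G \<subseteq> T" "\<forall>H. radical_ideal H \<and> G \<subseteq> H \<longrightarrow> F \<subseteq> H"
      by blast
    have "\<forall>g\<in>G. \<exists>U\<in>\<U>. g \<in> Sf U" using G(2) by (auto simp: T_def)
    then obtain u where u: "\<forall>g\<in>G. u g \<in> \<U> \<and> g \<in> Sf (u g)" by metis
    have "W \<subseteq> \<Union>(u ` G)"
    proof
      fix P assume "P \<in> W"
      then have P: "P \<in> Spec" "\<not> F \<subseteq> P" using F by (auto simp: VV_def)
      then have "\<not> G \<subseteq> P" using G(3) prime_radical by (auto simp: Spec_def)
      then obtain g where g: "g \<in> G" "g \<notin> P" by blast
      then have "P \<in> u g" using u Sf P(1) by (auto simp: VV_def)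
      then show "P \<in> \<Union>(u ` G)" using g by blast
    qed
    then show "\<exists>\<F>. finite \<F> \<and> \<F> \<subseteq> \<U> \<and> W \<subseteq> \<Union>\<F>"
      using G(1) u by (intro exI[of _ "u ` G"]) auto
  qed
  ultimately show "qc_open zariski_Spec W" by (simp add: qc_open_def)
qed

lemma gen_compactin:
  assumes A: "A \<subseteq> \<Union>S"
    and fin: "\<And>C. C \<subseteq> S \<Longrightarrow> A \<subseteq> \<Union>C \<Longrightarrow> \<exists>C'. finite C' \<and> C' \<subseteq> C \<and> A \<subseteq> \<Union>C'"
  shows "compactin (topology_generated_by S) A"
proof -
  define Q where "Q = ((finite' intersection_of (\<lambda>x. x \<in> S)) relative_to A)"
  have op0: "openin (topology_generated_by S) = generate_topology_on S"
    by (rule ext) (rule openin_topology_generated_by_iff)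
  have op: "openin (topology_generated_by S) = arbitrary union_of (finite' intersection_of (\<lambda>x. x \<in> S))"
    unfolding op0 by (rule generate_topology_on_eq)
  have "openin (subtopology (topology_generated_by S) A) = arbitrary union_of Q"
    unfolding Q_def by (simp add: openin_relative_to[symmetric] op arbitrary_union_of_relative_to)
  then have sub: "subtopology (topology_generated_by S) A = topology (arbitrary union_of Q)"
    by (metis openin_inverse)
  have eqT: "topology (arbitrary union_of (finite intersection_of (\<lambda>x. x \<in> S) relative_to A))
      = subtopology (topology_generated_by S) A"
    unfolding sub
  proof (rule topology_bases_eq)
    fix U x assume U: "(finite intersection_of (\<lambda>x. x \<in> S) relative_to A) U" and x: "x \<in> U"
    then obtain F where F: "finite F" "F \<subseteq> S" "U = A \<inter> \<Inter>F"
      by (auto simp: relative_to_def intersection_of_def)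
    show "\<exists>V. Q V \<and> x \<in> V \<and> V \<subseteq> U"
    proof (cases "F = {}")
      case True
      then have "x \<in> A" using F x by auto
      then obtain s where s: "s \<in> S" "x \<in> s" using A by blast
      have "Q (A \<inter> s)" unfolding Q_def relative_to_def intersection_of_def
        by (rule exI[of _ s]) (use s in auto)
      then show ?thesis using s \<open>x \<in> A\<close> F True by (intro exI[of _ "A \<inter> s"]) auto
    next
      case False
      have "Q U" unfolding Q_def relative_to_def intersection_of_def
        by (rule exI[of _ "\<Inter>F"]) (use F False in auto)
      then show ?thesis using x by blast
    qed
  next
    fix V x assume "Q V" "x \<in> V"
    then show "\<exists>U. (finite intersection_of (\<lambda>x. x \<in> S) relative_to A) U \<and> x \<in> U \<and> U \<subseteq> V"
      unfolding Q_def relative_to_def intersection_of_def by blast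
  qed
  have "compact_space (subtopology (topology_generated_by S) A)"
    by (rule Alexander_subbase_alt[OF A fin eqT]) auto
  then show ?thesis using A by (simp add: compactin_subspace)
qed

definition Bs :: "'a::comm_ring_1 set \<Rightarrow> 'a set set" where
  "Bs F = {H\<in>Rd. F \<subseteq> H}"

definition TT :: "'a::comm_ring_1 set topology" where
  "TT = topology_generated_by {Bs F | F. finite F}"

lemma Bs_sub: "Bs F \<subseteq> Rd" by (auto simp: Bs_def)
lemma Bs_empty: "Bs {} = Rd" by (auto simp: Bs_def)
lemma Bs_one: "Bs {1} = {}" using Rd_one by (auto simp: Bs_def)
lemma Bs_Un: "Bs F \<inter> Bs G = Bs (F \<union> G)" by (auto simp: Bs_def)

lemma TT_top: "topspace TT = Rd"
proof -
  have "\<Union>{Bs F | F::'a set. finite F} = Rd" using Bs_sub Bs_empty by blast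
  then show ?thesis by (simp add: TT_def)
qed

lemma TT_open_iff: "openin TT U \<longleftrightarrow> U \<subseteq> Rd \<and> (\<forall>H\<in>U. \<exists>F. finite F \<and> F \<subseteq> H \<and> Bs F \<subseteq> U)"
proof
  assume "openin TT U"
  then have g: "generate_topology_on {Bs F | F. finite F} U"
    by (simp add: TT_def openin_topology_generated_by_iff)
  have "U \<subseteq> Rd" using \<open>openin TT U\<close> TT_top openin_subset by blast
  moreover have "\<forall>H\<in>U. \<exists>F. finite F \<and> F \<subseteq> H \<and> Bs F \<subseteq> U"
    using g
  proof induction
    case Empty then show ?case by blast
  next
    case (Int a b)
    show ?case
    proof
      fix H assume "H \<in> a \<inter> b"
      then have "H \<in> a" "H \<in> b" by auto
      then obtain F G where "finite F" "F \<subseteq> H" "Bs F \<subseteq> a" "finite G" "G \<subseteq> H" "Bs G \<subseteq> b"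
        using Int.IH(1) Int.IH(2) by meson
      then show "\<exists>F. finite F \<and> F \<subseteq> H \<and> Bs F \<subseteq> a \<inter> b"
        by (intro exI[of _ "F \<union> G"]) (auto simp: Bs_def)
    qed
  next
    case (UN K)
    show ?case
    proof
      fix H assume "H \<in> \<Union>K"
      then obtain k where k: "k \<in> K" "H \<in> k" by blast
      then obtain F where "finite F" "F \<subseteq> H" "Bs F \<subseteq> k" using UN.IH by meson
      then show "\<exists>F. finite F \<and> F \<subseteq> H \<and> Bs F \<subseteq> \<Union>K" using k by blast
    qed
  next
    case (Basis s)
    then obtain F where "finite F" "s = Bs F" by blast
    then show ?case by (auto simp: Bs_def)
  qed
  ultimately show "U \<subseteq> Rd \<and> (\<forall>H\<in>U. \<exists>F. finite F \<and> F \<subseteq> H \<and> Bs F \<subseteq> U)" by blast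
next
  assume A: "U \<subseteq> Rd \<and> (\<forall>H\<in>U. \<exists>F. finite F \<and> F \<subseteq> H \<and> Bs F \<subseteq> U)"
  have "\<exists>T. openin TT T \<and> H \<in> T \<and> T \<subseteq> U" if "H \<in> U" for H
  proof -
    have "\<exists>F. finite F \<and> F \<subseteq> H \<and> Bs F \<subseteq> U" using A that by simp
    then obtain F where F: "finite F" "F \<subseteq> H" "Bs F \<subseteq> U" by blast
    have "openin TT (Bs F)" unfolding TT_def using F by (intro topology_generated_by_Basis) blast
    moreover have "H \<in> Bs F" using F that A by (auto simp: Bs_def)
    ultimately show ?thesis using F by blast
  qed
  then show "openin TT U" by (subst openin_subopen) blast
qed

lemma TT_Bs_open: "finite F \<Longrightarrow> openin TT (Bs F)"
  unfolding TT_def by (rule topology_generated_by_Basis) blast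

lemma TT_up: "openin TT U \<Longrightarrow> H \<in> U \<Longrightarrow> H' \<in> Rd \<Longrightarrow> H \<subseteq> H' \<Longrightarrow> H' \<in> U"
  unfolding TT_open_iff Bs_def by blast

lemma Bs_compact: "compactin TT (Bs F)"
  unfolding compactin_def
proof (intro conjI allI impI)
  show "Bs F \<subseteq> topspace TT" using Bs_sub TT_top by blast
next
  fix \<U> assume U: "(\<forall>U\<in>\<U>. openin TT U) \<and> Bs F \<subseteq> \<Union>\<U>"
  show "\<exists>\<F>. finite \<F> \<and> \<F> \<subseteq> \<U> \<and> Bs F \<subseteq> \<Union>\<F>"
  proof (cases "Bs F = {}")
    case True then show ?thesis by blast
  next
    case False
    define H0 where "H0 = \<Inter>(Bs F)"
    have "H0 \<in> Rd" unfolding H0_def using False Bs_sub by (rule Rd_Inter)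
    then have "H0 \<in> Bs F" by (auto simp: H0_def Bs_def)
    then obtain U where "U \<in> \<U>" "H0 \<in> U" using U by blast
    then have "Bs F \<subseteq> U" using TT_up U by (auto simp: H0_def Bs_def)
    then show ?thesis using \<open>U \<in> \<U>\<close> by (intro exI[of _ "{U}"]) auto
  qed
qed

lemma TT_qc: "qc_open TT U \<longleftrightarrow> (\<exists>\<F>. finite \<F> \<and> (\<forall>F\<in>\<F>. finite F) \<and> U = \<Union>(Bs ` \<F>))"
proof
  assume "qc_open TT U"
  then have op: "openin TT U" and cp: "compactin TT U" by (auto simp: qc_open_def)
  define \<F>0 where "\<F>0 = {F. finite F \<and> Bs F \<subseteq> U}"
  have "U \<subseteq> \<Union>(Bs ` \<F>0)"
  proof
    fix H assume "H \<in> U"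
    have opU: "U \<subseteq> Rd \<and> (\<forall>H\<in>U. \<exists>F. finite F \<and> F \<subseteq> H \<and> Bs F \<subseteq> U)"
      using op TT_open_iff by blast
    then obtain F where "finite F" "F \<subseteq> H" "Bs F \<subseteq> U" using \<open>H \<in> U\<close> by blast
    moreover have "H \<in> Rd" using \<open>H \<in> U\<close> opU by blast
    ultimately show "H \<in> \<Union>(Bs ` \<F>0)" by (auto simp: \<F>0_def Bs_def)
  qed
  moreover have "\<forall>V\<in>Bs ` \<F>0. openin TT V" using TT_Bs_open by (auto simp: \<F>0_def)
  ultimately obtain C where C: "finite C" "C \<subseteq> Bs ` \<F>0" "U \<subseteq> \<Union>C"
    using cp unfolding compactin_def by meson
  then obtain \<F> where F: "\<F> \<subseteq> \<F>0" "finite \<F>" "C = Bs ` \<F>" by (meson finite_subset_image)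
  have "U = \<Union>(Bs ` \<F>)" using C F by (auto simp: \<F>0_def)
  then show "\<exists>\<F>. finite \<F> \<and> (\<forall>F\<in>\<F>. finite F) \<and> U = \<Union>(Bs ` \<F>)" using F by (auto simp: \<F>0_def)
next
  assume "\<exists>\<F>. finite \<F> \<and> (\<forall>F\<in>\<F>. finite F) \<and> U = \<Union>(Bs ` \<F>)"
  then obtain \<F> where F: "finite \<F>" "\<forall>F\<in>\<F>. finite F" "U = \<Union>(Bs ` \<F>)" by blast
  have "openin TT U" unfolding F(3) using F(2) TT_Bs_open by (intro openin_Union) auto
  moreover have "compactin TT U" unfolding F(3) by (rule compactin_Union) (use F(1) Bs_compact in auto)
  ultimately show "qc_open TT U" by (simp add: qc_open_def)
qed

lemma tgb_eq:
  assumes "\<And>a. a \<in> A \<Longrightarrow> openin (topology_generated_by B) a"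
      and "\<And>b. b \<in> B \<Longrightarrow> openin (topology_generated_by A) b"
  shows "topology_generated_by A = topology_generated_by B"
proof -
  have "generate_topology_on B s" if "generate_topology_on A s" for s
    using generate_topology_on_coarsest[OF istopology_generate_topology_on _ that] assms(1)
    by (simp add: openin_topology_generated_by_iff)
  moreover have "generate_topology_on A s" if "generate_topology_on B s" for s
    using generate_topology_on_coarsest[OF istopology_generate_topology_on _ that] assms(2)
    by (simp add: openin_topology_generated_by_iff)
  ultimately show ?thesis
    by (auto simp: topology_eq openin_topology_generated_by_iff)
qed

lemma hk_eq: "hk_Rd = topology_generated_by {Rd - Bs F | F. finite F}"
  by (simp add: hk_Rd_def Bs_def)

lemma hk_top: "topspace hk_Rd = Rd"
proof -
  have "\<Union>{Rd - Bs F | F::'a set. finite F} = Rd" using Bs_one[where 'a='a] by blast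
  then show ?thesis by (simp add: hk_eq)
qed

lemma hk_gen_open: "finite F \<Longrightarrow> openin hk_Rd (Rd - Bs F)"
  unfolding hk_eq by (rule topology_generated_by_Basis) blast

lemma hk_down:
  assumes "openin hk_Rd U" shows "\<forall>H\<in>U. \<forall>H'\<in>Rd. H' \<subseteq> H \<longrightarrow> H' \<in> U"
proof -
  have "generate_topology_on {Rd - Bs F | F. finite F} U"
    using assms by (simp add: hk_eq openin_topology_generated_by_iff)
  then show ?thesis
  proof induction
    case (Basis s) then show ?case by (auto simp: Bs_def)
  qed blast+
qed

lemma hk_sub_qc:
  assumes F: "finite F" shows "qc_open hk_Rd (Rd - Bs F)"
proof -
  define S where "S = {Rd - Bs G | G::'a set. finite G}"
  have "compactin (topology_generated_by S) (Rd - Bs F)"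
  proof (rule gen_compactin)
    show "Rd - Bs F \<subseteq> \<Union>S" unfolding S_def using Bs_one by blast
  next
    fix C assume C: "C \<subseteq> S" "Rd - Bs F \<subseteq> \<Union>C"
    then have "\<forall>c\<in>C. \<exists>G. finite G \<and> c = Rd - Bs G" unfolding S_def by blast
    then obtain Gc where Gc: "\<forall>c\<in>C. finite (Gc c) \<and> c = Rd - Bs (Gc c)" by metis
    define T where "T = \<Union>(Gc ` C)"
    have "\<forall>P\<in>Spec. T \<subseteq> P \<longrightarrow> F \<subseteq> P"
    proof (intro ballI impI)
      fix P assume P: "P \<in> Spec" "T \<subseteq> P"
      then have PR: "P \<in> Rd" using Spec_Rd by blast
      have "P \<notin> c" if "c \<in> C" for c
      proof -
        have "Gc c \<subseteq> P" using P(2) that unfolding T_def by blast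
        then show ?thesis using Gc that PR unfolding Bs_def by blast
      qed
      then have "P \<notin> Rd - Bs F" using C(2) by blast
      then show "F \<subseteq> P" using PR by (auto simp: Bs_def)
    qed
    from K[OF F this] obtain G where G: "finite G" "G \<subseteq> T" "\<forall>H. radical_ideal H \<and> G \<subseteq> H \<longrightarrow> F \<subseteq> H"
      by blast
    have "\<forall>g\<in>G. \<exists>c\<in>C. g \<in> Gc c" using G(2) by (auto simp: T_def)
    then obtain u where u: "\<forall>g\<in>G. u g \<in> C \<and> g \<in> Gc (u g)" by metis
    have "Rd - Bs F \<subseteq> \<Union>(u ` G)"
    proof
      fix H assume "H \<in> Rd - Bs F"
      then have H: "H \<in> Rd" "\<not> F \<subseteq> H" by (auto simp: Bs_def)
      then have "\<not> G \<subseteq> H" using G(3) by (auto simp: Rd_def)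
      then obtain g where g: "g \<in> G" "g \<notin> H" by blast
      then have "H \<in> u g" using u Gc H(1) unfolding Bs_def by blast
      then show "H \<in> \<Union>(u ` G)" using g by blast
    qed
    then show "\<exists>C'. finite C' \<and> C' \<subseteq> C \<and> Rd - Bs F \<subseteq> \<Union>C'"
      using G(1) u by (intro exI[of _ "u ` G"]) auto
  qed
  then have "compactin hk_Rd (Rd - Bs F)" by (simp add: hk_eq S_def)
  then show ?thesis using hk_gen_open[OF F] by (simp add: qc_open_def)
qed

lemma inv_top: "topspace (inverse_topology X) = topspace X"
proof -
  have "qc_open X {}" by (simp add: qc_open_def)
  then have "\<Union>{topspace X - U | U. qc_open X U} = topspace X" by blast
  then show ?thesis by (simp add: inverse_topology_def)
qed

lemma inv_hk: "inverse_topology hk_Rd = TT"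
  unfolding inverse_topology_def TT_def hk_top
proof (rule tgb_eq)
  fix a assume "a \<in> {Rd - U | U. qc_open hk_Rd U}"
  then obtain U where U: "a = Rd - U" "qc_open hk_Rd U" by blast
  have opU: "openin hk_Rd U" and cpU: "compactin hk_Rd U" using U by (auto simp: qc_open_def)
  have "\<exists>F. finite F \<and> F \<subseteq> H \<and> Bs F \<subseteq> a" if H: "H \<in> a" for H
  proof -
    have HR: "H \<in> Rd" "H \<notin> U" using H U by auto
    have "\<forall>K\<in>U. \<exists>x. x \<in> H \<and> x \<notin> K"
    proof
      fix K assume "K \<in> U"
      have "\<not> H \<subseteq> K" using hk_down[OF opU] \<open>K \<in> U\<close> HR by blast
      then show "\<exists>x. x \<in> H \<and> x \<notin> K" by blast
    qed
    then obtain xf where xf: "\<forall>K\<in>U. xf K \<in> H \<and> xf K \<notin> K" by metis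
    have "U \<subseteq> \<Union>((\<lambda>K. Rd - Bs {xf K}) ` U)"
      using xf opU hk_top openin_subset by (fastforce simp: Bs_def)
    moreover have "\<forall>V\<in>(\<lambda>K. Rd - Bs {xf K}) ` U. openin hk_Rd V" using hk_gen_open by blast
    ultimately obtain C where C: "finite C" "C \<subseteq> (\<lambda>K. Rd - Bs {xf K}) ` U" "U \<subseteq> \<Union>C"
      using cpU unfolding compactin_def by meson
    then obtain KK where KK: "KK \<subseteq> U" "finite KK" "C = (\<lambda>K. Rd - Bs {xf K}) ` KK"
      by (meson finite_subset_image)
    have "Bs (xf ` KK) \<subseteq> a"
    proof
      fix H' assume H': "H' \<in> Bs (xf ` KK)"
      have "H' \<notin> U"
      proof
        assume "H' \<in> U"
        then obtain K where "K \<in> KK" "H' \<in> Rd - Bs {xf K}" using C(3) KK(3) by blast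
        then show False using H' by (auto simp: Bs_def)
      qed
      then show "H' \<in> a" using H' U by (auto simp: Bs_def)
    qed
    moreover have "xf ` KK \<subseteq> H" using xf KK by blast
    ultimately show ?thesis using KK by blast
  qed
  moreover have "a \<subseteq> Rd" using U by blast
  ultimately show "openin (topology_generated_by {Bs F |F. finite F}) a"
    by (simp add: TT_def[symmetric] TT_open_iff)
next
  fix b assume "b \<in> {Bs F |F. finite F}"
  then obtain F where F: "b = Bs F" "finite F" by blast
  have "b = Rd - (Rd - Bs F)" using F Bs_sub by blast
  then have "b \<in> {Rd - U | U. qc_open hk_Rd U}" using hk_sub_qc[OF F(2)] by blast
  then show "openin (topology_generated_by {Rd - U | U. qc_open hk_Rd U}) b"
    by (rule topology_generated_by_Basis)
qed

lemma inv_TT: "inverse_topology TT = hk_Rd"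
  unfolding inverse_topology_def hk_eq TT_top
proof (rule tgb_eq)
  fix a assume "a \<in> {Rd - U | U. qc_open TT U}"
  then obtain U where U: "a = Rd - U" "qc_open TT U" by blast
  from U(2)[unfolded TT_qc] obtain \<F> where F: "finite \<F>" "\<forall>F\<in>\<F>. finite F" "U = \<Union>(Bs ` \<F>)" by blast
  show "openin (topology_generated_by {Rd - Bs F |F. finite F}) a"
  proof (cases "\<F> = {}")
    case True
    then have "a = Rd" using U(1) F(3) by simp
    have "openin hk_Rd Rd" using openin_topspace[of hk_Rd] by (simp only: hk_top)
    then show ?thesis unfolding hk_eq[symmetric] using \<open>a = Rd\<close> by simp
  next
    case False
    have "a = \<Inter>((\<lambda>F. Rd - Bs F) ` \<F>)" using U F False by auto
    moreover have "openin hk_Rd (\<Inter>((\<lambda>F. Rd - Bs F) ` \<F>))"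
      using F False hk_gen_open by (intro openin_Inter) auto
    ultimately show ?thesis by (simp add: hk_eq)
  qed
next
  fix b assume "b \<in> {Rd - Bs F |F. finite F}"
  then obtain F where F: "b = Rd - Bs F" "finite F" by blast
  have "qc_open TT (Bs F)" using F(2) by (simp add: qc_open_def TT_Bs_open Bs_compact)
  then have "b \<in> {Rd - U | U. qc_open TT U}" using F by blast
  then show "openin (topology_generated_by {Rd - U | U. qc_open TT U}) b"
    by (rule topology_generated_by_Basis)
qed

abbreviation XZ where "XZ \<equiv> Xprime (zariski_Spec :: 'a::comm_ring_1 set topology)"

lemma Xprime_iff: "Y \<in> Xprime zariski_Spec \<longleftrightarrow> (\<exists>S. Y = VV S) \<and> Y \<noteq> {}"
  by (simp add: Xprime_def Z_closed)

lemma Xprime_sub: "Y \<in> Xprime zariski_Spec \<Longrightarrow> Y \<subseteq> Spec"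
  using Xprime_iff VV_sub by blast

lemma Xprime_Rd: "Y \<in> Xprime zariski_Spec \<Longrightarrow> \<Inter>Y \<in> Rd"
  using Xprime_iff Xprime_sub Spec_Rd Rd_Inter by (metis order_trans)

lemma VV_Inter_VV: "VV (\<Inter>(VV S)) = VV S"
  unfolding VV_def by blast

lemma Xprime_VV_Inter: "Y \<in> Xprime zariski_Spec \<Longrightarrow> VV (\<Inter>Y) = Y"
  using Xprime_iff VV_Inter_VV by metis

lemma Rd_VV: "H \<in> Rd \<Longrightarrow> VV H \<in> Xprime zariski_Spec \<and> \<Inter>(VV H) = H"
  using Rd_V[of H] Xprime_iff by (auto simp: VV_def)

lemma Xz_eq: "Xprime_zar (zariski_Spec :: 'a::comm_ring_1 set topology) = topology_generated_by {{Y \<in> Xprime zariski_Spec. F \<subseteq> \<Inter>Y} | F. finite F}"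
proof -
  have "(\<lambda>W. {Y \<in> Xprime (zariski_Spec :: 'a set topology). Y \<inter> W = {}}) ` {W. qc_open zariski_Spec W}
        = {{Y \<in> Xprime zariski_Spec. F \<subseteq> \<Inter>Y} | F::'a set. finite F}"
  proof -
    have eq: "{Y \<in> Xprime zariski_Spec. Y \<inter> (Spec - VV F) = {}} = {Y \<in> Xprime zariski_Spec. F \<subseteq> \<Inter>Y}" for F :: "'a set"
    proof -
      have "Y \<inter> (Spec - VV F) = {} \<longleftrightarrow> F \<subseteq> \<Inter>Y" if "Y \<in> Xprime zariski_Spec" for Y
        using Xprime_sub[OF that] unfolding VV_def by blast
      then show ?thesis by blast
    qed
    have q: "{W. qc_open zariski_Spec W} = (\<lambda>F. Spec - VV F) ` {F::'a set. finite F}"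
      by (auto simp: Z_qc)
    have "(\<lambda>W. {Y \<in> Xprime zariski_Spec. Y \<inter> W = {}}) ` {W. qc_open zariski_Spec W}
        = (\<lambda>F. {Y \<in> Xprime zariski_Spec. F \<subseteq> \<Inter>Y}) ` {F::'a set. finite F}"
      unfolding q image_image eq by (rule refl)
    then show ?thesis unfolding setcompr_eq_image .
  qed
  then show ?thesis by (simp add: Xprime_zar_def)
qed

lemma Xz_top: "topspace (Xprime_zar zariski_Spec) = Xprime (zariski_Spec :: 'a::comm_ring_1 set topology)"
proof -
  have "\<Union>{{Y \<in> Xprime zariski_Spec. F \<subseteq> \<Inter>Y} | F::'a set. finite F} = Xprime zariski_Spec" by blast
  then show ?thesis by (simp add: Xz_eq)
qed

lemma J_homeo: "homeomorphic_maps (Xprime_zar (zariski_Spec :: 'a::comm_ring_1 set topology)) TT (\<lambda>C. \<Inter>C) VV"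
  unfolding homeomorphic_maps_def
proof (intro conjI ballI)
  show "continuous_map (Xprime_zar (zariski_Spec :: 'a set topology)) TT (\<lambda>C. \<Inter>C)"
    unfolding TT_def continuous_on_generated_topo_iff
  proof (intro conjI allI impI)
    fix U :: "'a set set" assume "U \<in> {Bs F | F. finite F}"
    then obtain F where F: "finite F" "U = Bs F" by blast
    have "(\<lambda>C. \<Inter>C) -` U \<inter> topspace (Xprime_zar zariski_Spec) = {Y \<in> Xprime zariski_Spec. F \<subseteq> \<Inter>Y}"
      using Xprime_Rd unfolding F(2) Xz_top Bs_def by blast
    then show "openin (Xprime_zar zariski_Spec) ((\<lambda>C. \<Inter>C) -` U \<inter> topspace (Xprime_zar zariski_Spec))"
      unfolding Xz_eq using F(1) by (auto intro: topology_generated_by_Basis)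
  next
    show "(\<lambda>C. \<Inter>C) ` topspace (Xprime_zar (zariski_Spec :: 'a set topology)) \<subseteq> \<Union>{Bs F | F::'a set. finite F}"
      using Xprime_Rd Bs_empty unfolding Xz_top by blast
  qed
next
  show "continuous_map TT (Xprime_zar (zariski_Spec :: 'a set topology)) VV"
    unfolding Xz_eq continuous_on_generated_topo_iff
  proof (intro conjI allI impI)
    fix U assume "U \<in> {{Y \<in> Xprime (zariski_Spec :: 'a set topology). F \<subseteq> \<Inter>Y} | F. finite F}"
    then obtain F where F: "finite F" "U = {Y \<in> Xprime zariski_Spec. F \<subseteq> \<Inter>Y}" by blast
    have "VV -` U \<inter> topspace TT = Bs F"
      using Rd_VV unfolding F(2) TT_top Bs_def by auto
    then show "openin TT (VV -` U \<inter> topspace TT)" using TT_Bs_open F(1) by simp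
  next
    show "VV ` topspace TT \<subseteq> \<Union>{{Y \<in> Xprime (zariski_Spec :: 'a set topology). F \<subseteq> \<Inter>Y} | F. finite F}"
      using Rd_VV unfolding TT_top by blast
  qed
next
  fix x assume "x \<in> topspace (Xprime_zar (zariski_Spec :: 'a set topology))"
  then show "VV (\<Inter>x) = x" using Xprime_VV_Inter Xz_top by blast
next
  fix y assume "y \<in> topspace (TT :: 'a set topology)"
  then show "\<Inter>(VV y) = y" using Rd_VV TT_top by blast
qed

lemma TT_closure: "H \<in> Rd \<Longrightarrow> TT closure_of {H} = {H'\<in>Rd. H' \<subseteq> H}"
proof
  assume H: "H \<in> Rd"
  show "TT closure_of {H} \<subseteq> {H'\<in>Rd. H' \<subseteq> H}"
  proof
    fix x assume x: "x \<in> TT closure_of {H}"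
    then have xR: "x \<in> Rd" by (simp add: closure_of_def TT_top)
    have "a \<in> H" if "a \<in> x" for a
    proof -
      have "x \<in> Bs {a}" using xR that by (simp add: Bs_def)
      moreover have "openin TT (Bs {a})" by (rule TT_Bs_open) simp
      ultimately have "H \<in> Bs {a}" using x unfolding closure_of_def by blast
      then show ?thesis by (simp add: Bs_def)
    qed
    then show "x \<in> {H'\<in>Rd. H' \<subseteq> H}" using xR by blast
  qed
  show "{H'\<in>Rd. H' \<subseteq> H} \<subseteq> TT closure_of {H}"
    unfolding closure_of_def TT_top using TT_up H by blast
qed

lemma TT_closed_down: "closedin TT C \<Longrightarrow> H \<in> C \<Longrightarrow> H' \<in> Rd \<Longrightarrow> H' \<subseteq> H \<Longrightarrow> H' \<in> C"
proof (rule ccontr)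
  assume C: "closedin TT C" and H: "H \<in> C" "H' \<in> Rd" "H' \<subseteq> H" "H' \<notin> C"
  have "openin TT (Rd - C)" using C by (simp add: closedin_def TT_top)
  moreover have "H \<in> Rd" using C H(1) closedin_subset TT_top by blast
  ultimately have "H \<in> Rd - C" using TT_up H by blast
  then show False using H by blast
qed

lemma TT_Bs_closed_compl: "finite F \<Longrightarrow> closedin TT (Rd - Bs F)"
proof -
  assume "finite F"
  then have "openin TT (Bs F)" by (rule TT_Bs_open)
  moreover have "Rd - (Rd - Bs F) = Bs F" using Bs_sub by blast
  ultimately show ?thesis by (simp add: closedin_def TT_top)
qed

lemma TT_irreducible_generic:
  assumes C: "closedin TT C" "irreducible_in TT C"
  shows "\<exists>!x. x \<in> C \<and> TT closure_of {x} = C"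
proof -
  have CR: "C \<subseteq> Rd" and Cne: "C \<noteq> {}" using C by (auto simp: irreducible_in_def TT_top)
  have irr: "\<And>A B. closedin TT A \<Longrightarrow> closedin TT B \<Longrightarrow> C \<subseteq> A \<union> B \<Longrightarrow> C \<subseteq> A \<or> C \<subseteq> B"
    using C(2) by (simp add: irreducible_in_def)
  have dir: "F \<subseteq> \<Union>C \<Longrightarrow> \<exists>H\<in>C. F \<subseteq> H" if "finite F" for F
    using that
  proof (induction F rule: finite_induct)
    case empty then show ?case using Cne by blast
  next
    case (insert x F)
    have "x \<in> \<Union>C" "F \<subseteq> \<Union>C" using insert.prems by auto
    then obtain H1 where H1: "H1 \<in> C" "x \<in> H1" by blast
    obtain H2 where H2: "H2 \<in> C" "F \<subseteq> H2" using insert.IH[OF \<open>F \<subseteq> \<Union>C\<close>] by blast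
    show ?case
    proof (rule ccontr)
      assume no: "\<not> (\<exists>H\<in>C. insert x F \<subseteq> H)"
      have "C \<subseteq> (Rd - Bs {x}) \<union> (Rd - Bs F)"
        using no CR by (auto simp: Bs_def)
      then have "C \<subseteq> Rd - Bs {x} \<or> C \<subseteq> Rd - Bs F"
        using irr TT_Bs_closed_compl insert(1) by (meson finite.emptyI finite.insertI)
      then show False using H1 H2 CR by (auto simp: Bs_def)
    qed
  qed
  define H0 where "H0 = \<Union>C"
  have idl0: "ring_ideal H" "radical_ideal H" if "H \<in> C" for H
    using that CR by (auto simp: Rd_def radical_ideal_def)
  have idl1: "1 \<notin> H" if "H \<in> C" for H
    using that CR Rd_one by blast
  note idl = idl0 idl1
  have H0R: "H0 \<in> Rd"
  proof -
    have "ring_ideal H0"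
      unfolding ring_ideal_def
    proof (intro conjI ballI allI)
      obtain H where "H \<in> C" using Cne by blast
      then have "0 \<in> H" using idl0(1) ideal_0 by blast
      then show "0 \<in> H0" using \<open>H \<in> C\<close> unfolding H0_def by blast
    next
      fix x y assume "x \<in> H0" "y \<in> H0"
      then obtain H where "H \<in> C" "{x, y} \<subseteq> H" using dir[of "{x,y}"] unfolding H0_def by auto
      then have "x \<in> H" "y \<in> H" by auto
      then have "x + y \<in> H" using ideal_add[OF idl0(1)[OF \<open>H \<in> C\<close>]] by blast
      then show "x + y \<in> H0" using \<open>H \<in> C\<close> unfolding H0_def by blast
    next
      fix r x assume "x \<in> H0"
      then obtain H where "H \<in> C" "x \<in> H" unfolding H0_def by blast
      then have "r * x \<in> H" using idl0(1) ideal_mult by blast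
      then show "r * x \<in> H0" using \<open>H \<in> C\<close> unfolding H0_def by blast
    qed
    moreover have "x \<in> H0" if xn: "x ^ n \<in> H0" for x and n :: nat
    proof -
      obtain H where "H \<in> C" "x ^ n \<in> H" using xn[unfolded H0_def] by blast
      then have "x \<in> H" using idl0(2) radical_pow by blast
      then show ?thesis using \<open>H \<in> C\<close> unfolding H0_def by blast
    qed
    moreover have "H0 \<noteq> UNIV" using idl1 unfolding H0_def by blast
    ultimately show ?thesis by (auto simp: Rd_def radical_ideal_def)
  qed
  have H0C: "H0 \<in> C"
  proof (rule ccontr)
    assume "H0 \<notin> C"
    then have "H0 \<in> Rd - C" using H0R by blast
    moreover have "openin TT (Rd - C)" using C(1) by (simp add: closedin_def TT_top)
    then have "\<forall>H\<in>Rd - C. \<exists>F. finite F \<and> F \<subseteq> H \<and> Bs F \<subseteq> Rd - C"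
      unfolding TT_open_iff by blast
    ultimately obtain F where F: "finite F" "F \<subseteq> H0" "Bs F \<subseteq> Rd - C"
      by blast
    then obtain H where "H \<in> C" "F \<subseteq> H" using dir[OF F(1) F(2)[unfolded H0_def]] by blast
    then have "H \<in> Bs F" using CR by (auto simp: Bs_def)
    then show False using F(3) \<open>H \<in> C\<close> by blast
  qed
  have cl: "TT closure_of {H0} = C"
  proof -
    have "TT closure_of {H0} = {H'\<in>Rd. H' \<subseteq> H0}" using TT_closure H0R by blast
    also have "\<dots> = C"
    proof
      show "{H'\<in>Rd. H' \<subseteq> H0} \<subseteq> C" using TT_closed_down[OF C(1) H0C] by blast
      show "C \<subseteq> {H'\<in>Rd. H' \<subseteq> H0}" using CR unfolding H0_def by blast
    qed
    finally show ?thesis .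
  qed
  show ?thesis
  proof (rule ex1I[of _ H0])
    show "H0 \<in> C \<and> TT closure_of {H0} = C" using H0C cl by blast
  next
    fix y assume y: "y \<in> C \<and> TT closure_of {y} = C"
    then have yR: "y \<in> Rd" using CR by blast
    have "y \<subseteq> H0" using y TT_closure[OF H0R] cl by blast
    moreover have "H0 \<subseteq> y" using H0C y TT_closure[OF yR] by blast
    ultimately show "y = H0" by blast
  qed
qed

lemma spectral_TT: "spectral_space (TT :: 'a::comm_ring_1 set topology)"
  unfolding spectral_space_def
proof (intro conjI allI impI)
  show "compact_space TT"
    unfolding compact_space_def TT_top using Bs_compact[of "{}"] by (simp add: Bs_empty)
next
  show "t0_space TT"
    unfolding t0_space_def TT_top
  proof (intro ballI impI)
    fix x y assume xy: "x \<in> Rd" "y \<in> Rd" "x \<noteq> y"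
    then obtain a where "a \<in> x \<and> a \<notin> y \<or> a \<in> y \<and> a \<notin> x" by blast
    moreover have "openin TT (Bs {a})" by (rule TT_Bs_open) simp
    ultimately show "\<exists>U. openin TT U \<and> (x \<notin> U \<longleftrightarrow> y \<in> U)"
      using xy by (intro exI[of _ "Bs {a}"]) (auto simp: Bs_def)
  qed
next
  fix U V :: "'a set set" assume "qc_open TT U \<and> qc_open TT V"
  then obtain \<F> \<G> :: "'a set set" where F: "finite \<F>" "\<forall>F\<in>\<F>. finite F" "U = \<Union>(Bs ` \<F>)"
    and G: "finite \<G>" "\<forall>F\<in>\<G>. finite F" "V = \<Union>(Bs ` \<G>)"
    unfolding TT_qc by blast
  define \<H> where "\<H> = (\<lambda>(F, G). F \<union> G) ` (\<F> \<times> \<G>)"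
  have "U \<inter> V = \<Union>(Bs ` \<H>)"
    unfolding F(3) G(3) \<H>_def by (auto simp: Bs_def)
  moreover have "finite \<H>" "\<forall>F\<in>\<H>. finite F" using F G unfolding \<H>_def by auto
  ultimately show "qc_open TT (U \<inter> V)" unfolding TT_qc by blast
next
  fix U :: "'a set set" and x assume A: "openin TT U \<and> x \<in> U"
  have op: "openin TT U" "x \<in> U" using A by auto
  have o2: "U \<subseteq> Rd \<and> (\<forall>H\<in>U. \<exists>F. finite F \<and> F \<subseteq> H \<and> Bs F \<subseteq> U)"
    using op(1) TT_open_iff by blast
  then obtain F where F: "finite F" "F \<subseteq> x" "Bs F \<subseteq> U" using op(2) by blast
  have "x \<in> Rd" using o2 op(2) by blast
  then have "x \<in> Bs F" using F by (simp add: Bs_def)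
  moreover have "qc_open TT (Bs F)" using F(1) by (simp add: qc_open_def TT_Bs_open Bs_compact)
  ultimately show "\<exists>V. qc_open TT V \<and> x \<in> V \<and> V \<subseteq> U" using F(3) by blast
next
  fix C :: "'a set set" assume "closedin TT C \<and> irreducible_in TT C"
  then have "closedin TT C" "irreducible_in TT C" by auto
  then show "\<exists>!x. x \<in> C \<and> TT closure_of {x} = C" by (rule TT_irreducible_generic)
qed

lemma qc_transport:
  assumes h: "homeomorphic_map X Y f" and U: "qc_open X U"
  shows "qc_open Y (f ` U)"
proof -
  have "U \<subseteq> topspace X" using U by (auto simp: qc_open_def dest: openin_subset)
  then show ?thesis using U homeomorphic_map_openness[OF h] homeomorphic_map_compactness[OF h]
    by (auto simp: qc_open_def)
qed

lemma inv_cont: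
  assumes h: "homeomorphic_maps X Y f g"
  shows "continuous_map (inverse_topology X) (inverse_topology Y) f"
proof -
  have hg: "homeomorphic_map Y X g" and fg: "\<forall>x\<in>topspace X. g (f x) = x" "\<forall>y\<in>topspace Y. f (g y) = y"
    using h by (auto simp: homeomorphic_maps_map)
  have cf: "continuous_map X Y f" using h by (simp add: homeomorphic_maps_def)
  have fX: "f ` topspace X \<subseteq> topspace Y" using cf by (simp add: continuous_map_image_subset_topspace)
  have gY: "g ` topspace Y \<subseteq> topspace X"
    using h by (simp add: homeomorphic_maps_def continuous_map_image_subset_topspace)
  show ?thesis
    unfolding inverse_topology_def[of Y] continuous_on_generated_topo_iff
  proof (intro conjI allI impI)
    fix W assume "W \<in> {topspace Y - U | U. qc_open Y U}"
    then obtain U where U: "W = topspace Y - U" "qc_open Y U" by blast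
    have UY: "U \<subseteq> topspace Y" using U(2) by (auto simp: qc_open_def dest: openin_subset)
    have qg: "qc_open X (g ` U)" using qc_transport[OF hg U(2)] .
    have "f -` W \<inter> topspace (inverse_topology X) = topspace X - g ` U"
    proof -
      have "f -` W \<inter> topspace X = topspace X - g ` U"
      proof
        show "f -` W \<inter> topspace X \<subseteq> topspace X - g ` U"
        proof
          fix x assume x: "x \<in> f -` W \<inter> topspace X"
          then have "f x \<notin> U" using U(1) by auto
          moreover have "x \<notin> g ` U"
          proof
            assume "x \<in> g ` U"
            then obtain u where "u \<in> U" "x = g u" by blast
            then have "f x = u" using fg UY by auto
            then show False using \<open>u \<in> U\<close> \<open>f x \<notin> U\<close> by blast
          qed
          ultimately show "x \<in> topspace X - g ` U" using x by blast
        qed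
        show "topspace X - g ` U \<subseteq> f -` W \<inter> topspace X"
        proof
          fix x assume x: "x \<in> topspace X - g ` U"
          then have "f x \<notin> U" using fg by (metis DiffD1 DiffD2 image_eqI)
          then show "x \<in> f -` W \<inter> topspace X" using x fX U(1) by auto
        qed
      qed
      then show ?thesis by (simp add: inv_top)
    qed
    moreover have "openin (inverse_topology X) (topspace X - g ` U)"
      unfolding inverse_topology_def using qg by (intro topology_generated_by_Basis) blast
    ultimately show "openin (inverse_topology X) (f -` W \<inter> topspace (inverse_topology X))" by simp
  next
    have "\<Union>{topspace Y - U | U. qc_open Y U} = topspace Y"
      using inv_top[of Y] by (simp add: inverse_topology_def)
    then show "f ` topspace (inverse_topology X) \<subseteq> \<Union>{topspace Y - U | U. qc_open Y U}"
      using fX by (simp add: inv_top)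
  qed
qed

lemma inv_homeo:
  assumes h: "homeomorphic_maps X Y f g"
  shows "homeomorphic_maps (inverse_topology X) (inverse_topology Y) f g"
proof -
  have h': "homeomorphic_maps Y X g f" using h homeomorphic_maps_sym by blast
  show ?thesis
    using inv_cont[OF h] inv_cont[OF h'] h unfolding homeomorphic_maps_def inv_top by blast
qed

lemma spectral_transport:
  assumes h: "homeomorphic_maps X Y f g" and sp: "spectral_space Y"
  shows "spectral_space X"
proof -
  have hf: "homeomorphic_map X Y f" and hg: "homeomorphic_map Y X g"
    and fg: "\<forall>x\<in>topspace X. g (f x) = x" "\<forall>y\<in>topspace Y. f (g y) = y"
    using h by (auto simp: homeomorphic_maps_map)
  have hs: "X homeomorphic_space Y" using h homeomorphic_space_def by blast
  have fX: "f ` topspace X \<subseteq> topspace Y" using hf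
    by (simp add: homeomorphic_imp_continuous_map continuous_map_image_subset_topspace)
  have gY: "g ` topspace Y \<subseteq> topspace X" using hg
    by (simp add: homeomorphic_imp_continuous_map continuous_map_image_subset_topspace)
  have gf_img: "g ` (f ` U) = U" if "U \<subseteq> topspace X" for U
    using fg(1) that by (force simp: image_image)
  have qcsub: "qc_open X U \<Longrightarrow> U \<subseteq> topspace X" for U
    by (auto simp: qc_open_def dest: openin_subset)
  have qcsubY: "qc_open Y U \<Longrightarrow> U \<subseteq> topspace Y" for U
    by (auto simp: qc_open_def dest: openin_subset)
  have sY: "compact_space Y" "t0_space Y"
    "\<And>U V. qc_open Y U \<Longrightarrow> qc_open Y V \<Longrightarrow> qc_open Y (U \<inter> V)"
    "\<And>U x. openin Y U \<Longrightarrow> x \<in> U \<Longrightarrow> \<exists>V. qc_open Y V \<and> x \<in> V \<and> V \<subseteq> U"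
    "\<And>C. closedin Y C \<Longrightarrow> irreducible_in Y C \<Longrightarrow> \<exists>!x. x \<in> C \<and> Y closure_of {x} = C"
    using sp unfolding spectral_space_def by blast+
  show ?thesis
    unfolding spectral_space_def
  proof (intro conjI allI impI)
    show "compact_space X" using sY(1) homeomorphic_compact_space[OF hs] by simp
    show "t0_space X" using sY(2) homeomorphic_t0_space[OF hs] by simp
  next
    fix U V assume A: "qc_open X U \<and> qc_open X V"
    have "qc_open Y (f ` U \<inter> f ` V)" using A qc_transport[OF hf] sY(3) by blast
    then have "qc_open X (g ` (f ` U \<inter> f ` V))" by (rule qc_transport[OF hg])
    moreover have "g ` (f ` U \<inter> f ` V) = U \<inter> V"
    proof
      show "g ` (f ` U \<inter> f ` V) \<subseteq> U \<inter> V"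
      proof
        fix z assume "z \<in> g ` (f ` U \<inter> f ` V)"
        then obtain u v where uv: "u \<in> U" "v \<in> V" "f u = f v" "z = g (f u)" by blast
        then have "z = u" "z = v" using fg(1) qcsub A by (metis subsetD)+
        then show "z \<in> U \<inter> V" using uv by blast
      qed
      show "U \<inter> V \<subseteq> g ` (f ` U \<inter> f ` V)"
      proof
        fix z assume "z \<in> U \<inter> V"
        then have "g (f z) = z" using fg(1) qcsub A by blast
        then show "z \<in> g ` (f ` U \<inter> f ` V)" using \<open>z \<in> U \<inter> V\<close> by (metis IntD1 IntD2 IntI image_eqI)
      qed
    qed
    ultimately show "qc_open X (U \<inter> V)" by simp
  next
    fix U x assume A: "openin X U \<and> x \<in> U"
    then have UX: "U \<subseteq> topspace X" by (simp add: openin_subset)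
    have "openin Y (f ` U)" using A homeomorphic_map_openness[OF hf UX] by blast
    then obtain V' where V': "qc_open Y V'" "f x \<in> V'" "V' \<subseteq> f ` U" using sY(4) A by blast
    have "qc_open X (g ` V')" using qc_transport[OF hg V'(1)] .
    moreover have "x \<in> g ` V'" using V'(2) fg(1) A UX by (metis image_eqI subsetD)
    moreover have "g ` V' \<subseteq> U" using V'(3) gf_img[OF UX] by blast
    ultimately show "\<exists>V. qc_open X V \<and> x \<in> V \<and> V \<subseteq> U" by blast
  next
    fix C assume A: "closedin X C \<and> irreducible_in X C"
    then have CX: "C \<subseteq> topspace X" by (simp add: closedin_subset)
    have cC: "closedin Y (f ` C)" using A homeomorphic_map_closedness[OF hf CX] by blast
    have iC: "irreducible_in Y (f ` C)"
      unfolding irreducible_in_def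
    proof (intro conjI allI impI)
      show "f ` C \<subseteq> topspace Y" using CX fX by blast
      show "f ` C \<noteq> {}" using A by (simp add: irreducible_in_def)
    next
      fix P Q assume B: "closedin Y P \<and> closedin Y Q \<and> f ` C \<subseteq> P \<union> Q"
      have cf: "continuous_map X Y f" using hf by (simp add: homeomorphic_imp_continuous_map)
      have "closedin X {x \<in> topspace X. f x \<in> P}" "closedin X {x \<in> topspace X. f x \<in> Q}"
        using B cf closedin_continuous_map_preimage by blast+
      moreover have "C \<subseteq> {x \<in> topspace X. f x \<in> P} \<union> {x \<in> topspace X. f x \<in> Q}"
        using B CX by blast
      ultimately have "C \<subseteq> {x \<in> topspace X. f x \<in> P} \<or> C \<subseteq> {x \<in> topspace X. f x \<in> Q}"
        using A unfolding irreducible_in_def by blast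
      then show "f ` C \<subseteq> P \<or> f ` C \<subseteq> Q" by blast
    qed
    obtain y where y: "y \<in> f ` C" "Y closure_of {y} = f ` C" using sY(5)[OF cC iC] by blast
    then obtain x0 where x0: "x0 \<in> C" "y = f x0" by blast
    have cl: "X closure_of {x} = C" if x: "x \<in> C" "Y closure_of {f x} = f ` C" for x
    proof -
      have "f ` (X closure_of {x}) = f ` C"
        using homeomorphic_map_closure_of[OF hf, of "{x}"] x CX by auto
      then have "g ` f ` (X closure_of {x}) = g ` f ` C" by simp
      moreover have "X closure_of {x} \<subseteq> topspace X" by (rule closure_of_subset_topspace)
      ultimately show ?thesis using gf_img CX by metis
    qed
    show "\<exists>!x. x \<in> C \<and> X closure_of {x} = C"
    proof (rule ex1I[of _ x0])
      show "x0 \<in> C \<and> X closure_of {x0} = C" using cl x0 y by blast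
    next
      fix z assume z: "z \<in> C \<and> X closure_of {z} = C"
      have "Y closure_of {f z} = f ` C"
        using homeomorphic_map_closure_of[OF hf, of "{z}"] z CX by auto
      moreover have "f z \<in> f ` C" using z by blast
      ultimately have "f z = y" using sY(5)[OF cC iC] y by blast
      then have "g (f z) = g (f x0)" using x0 by simp
      then show "z = x0" using fg(1) z x0 CX by (metis subsetD)
    qed
  qed
qed

theorem theorem4p1:
  shows "homeomorphic_map (Xprime_zar (zariski_Spec :: 'a::comm_ring_1 set topology))
            (inverse_topology (hk_Rd :: 'a set topology)) (\<lambda>C. \<Inter> C)
       \<and> spectral_space (Xprime_zar (zariski_Spec :: 'a set topology))
       \<and> homeomorphic_map (inverse_topology (Xprime_zar (zariski_Spec :: 'a set topology)))
            (hk_Rd :: 'a set topology) (\<lambda>C. \<Inter> C)"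
proof (intro conjI)
  have H: "homeomorphic_maps (Xprime_zar (zariski_Spec :: 'a set topology)) TT (\<lambda>C. \<Inter>C) VV"
    by (rule J_homeo)
  show "homeomorphic_map (Xprime_zar (zariski_Spec :: 'a set topology))
            (inverse_topology (hk_Rd :: 'a set topology)) (\<lambda>C. \<Inter> C)"
    unfolding inv_hk homeomorphic_map_maps using H by blast
  show "spectral_space (Xprime_zar (zariski_Spec :: 'a set topology))"
    using spectral_transport[OF H spectral_TT] .
  show "homeomorphic_map (inverse_topology (Xprime_zar (zariski_Spec :: 'a set topology)))
            (hk_Rd :: 'a set topology) (\<lambda>C. \<Inter> C)"
    using inv_homeo[OF H] unfolding inv_TT homeomorphic_map_maps by blast
qed

end
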